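(* Let $a>0$. For $\varphi\in H^1(\mathbb R^3,\mathbb C^2)$ for which $\frac{|\bm\sigma\cdot\nabla\varphi|^2}{1-|\varphi|^2}$ is integrable, define $$\mathcal F(\varphi)=\int_{\mathbb R^3}\frac{|\bm\sigma\cdot\nabla\varphi|^2}{1-|\varphi|^2}\,dx-\frac a2\int_{\mathbb R^3}|\varphi|^4\,dx.$$ In the integrand the convention $0/0=0$ is used, and the denominator $1-|\varphi|^2$ is allowed to be negative. Then $\mathcal F$ is unbounded from below on the set of such $\varphi$ with $\int_{\mathbb R^3}|\varphi|^2\,dx=1$. More precisely, there exist compactly supported such $\varphi_n$ of the form $\varphi_n=(u_n,0)^T$ with $u_n$ real valued and radial, $\int|\varphi_n|^2\,dx=1$, and $\mathcal F(\varphi_n)\to-\infty$.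
   Context: The Pauli matrices are $\sigma_1=\begin{pmatrix}0&1\\1&0\end{pmatrix}$, $\sigma_2=\begin{pmatrix}0&-i\\i&0\end{pmatrix}$ and $\sigma_3=\begin{pmatrix}1&0\\0&-1\end{pmatrix}$. For $\varphi:\mathbb R^3\to\mathbb C^2$ we write $\bm\sigma\cdot\nabla\varphi=\sum_{k=1}^3\sigma_k\partial_k\varphi$. *)

theory Defs
  imports "HOL-Analysis.Analysis"
begin

fun iter_partial :: "3 list \<Rightarrow> (real^3 \<Rightarrow> real) \<Rightarrow> real^3 \<Rightarrow> real" where
  "iter_partial [] f = f"
| "iter_partial (k # ks) f = (\<lambda>x. frechet_derivative (iter_partial ks f) (at x) (axis k 1))"

definition smooth_fun :: "(real^3 \<Rightarrow> real) \<Rightarrow> bool" where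
  "smooth_fun f \<longleftrightarrow> (\<forall>ks x. iter_partial ks f differentiable (at x))"

definition test_function :: "(real^3 \<Rightarrow> real) \<Rightarrow> bool" where
  "test_function \<psi> \<longleftrightarrow> smooth_fun \<psi> \<and> (\<exists>R. \<forall>x. norm x > R \<longrightarrow> \<psi> x = 0)"

definition weak_partial :: "3 \<Rightarrow> (real^3 \<Rightarrow> complex^2) \<Rightarrow> (real^3 \<Rightarrow> complex^2) \<Rightarrow> bool" where
  "weak_partial k f g \<longleftrightarrow>
     (\<forall>\<psi>. test_function \<psi> \<longrightarrow>
        (\<integral>x. frechet_derivative \<psi> (at x) (axis k 1) *\<^sub>R f x \<partial>lborel)
        = - (\<integral>x. \<psi> x *\<^sub>R g x \<partial>lborel))"

definition L2 :: "(real^3 \<Rightarrow> complex^2) \<Rightarrow> bool" where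
  "L2 f \<longleftrightarrow> f \<in> borel_measurable lborel \<and> integrable lborel (\<lambda>x. norm (f x) ^ 2)"

definition H1_with_grad :: "(real^3 \<Rightarrow> complex^2) \<Rightarrow> (3 \<Rightarrow> real^3 \<Rightarrow> complex^2) \<Rightarrow> bool" where
  "H1_with_grad \<phi> D \<longleftrightarrow> L2 \<phi> \<and> (\<forall>k. L2 (D k) \<and> weak_partial k \<phi> (D k))"

definition pauli :: "3 \<Rightarrow> complex^2^2" where
  "pauli k = (if k = 1 then vector [vector [0, 1], vector [1, 0]]
              else if k = 2 then vector [vector [0, - \<i>], vector [\<i>, 0]]
              else vector [vector [1, 0], vector [0, -1]])"

definition sigma_grad :: "(3 \<Rightarrow> real^3 \<Rightarrow> complex^2) \<Rightarrow> real^3 \<Rightarrow> complex^2" where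
  "sigma_grad D x = (\<Sum>k\<in>UNIV. pauli k *v D k x)"

text \<open>Admissible: phi in H^1 and |sigma.grad phi|^2/(1-|phi|^2) integrable (with 0/0 = 0;
  a nonzero numerator over a zero denominator on a set of positive measure is excluded).\<close>
definition admissible :: "(real^3 \<Rightarrow> complex^2) \<Rightarrow> (3 \<Rightarrow> real^3 \<Rightarrow> complex^2) \<Rightarrow> bool" where
  "admissible \<phi> D \<longleftrightarrow> H1_with_grad \<phi> D
     \<and> (AE x in lborel. norm (\<phi> x) = 1 \<longrightarrow> sigma_grad D x = 0)
     \<and> integrable lborel (\<lambda>x. norm (sigma_grad D x) ^ 2 / (1 - norm (\<phi> x) ^ 2))"

definition Ffun :: "real \<Rightarrow> (real^3 \<Rightarrow> complex^2) \<Rightarrow> (3 \<Rightarrow> real^3 \<Rightarrow> complex^2) \<Rightarrow> real" where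
  "Ffun a \<phi> D = (\<integral>x. norm (sigma_grad D x) ^ 2 / (1 - norm (\<phi> x) ^ 2) \<partial>lborel)
                 - a / 2 * (\<integral>x. norm (\<phi> x) ^ 4 \<partial>lborel)"

end

theory Submission
  imports Defs
begin

definition e0 :: "complex^2" where "e0 = vector [1, 0]"

lemma norm_e0: "norm e0 = 1"
  unfolding e0_def norm_vec_def L2_set_def by (simp add: sum_2)

lemma scaleR_e0: "r *\<^sub>R e0 = vector [complex_of_real r, 0]"
  unfolding e0_def by (simp add: vec_eq_iff forall_2) (simp add: scaleR_conv_of_real)

lemma norm_scaleR_e0: "norm (r *\<^sub>R e0) = \<bar>r\<bar>"
  by (simp add: norm_e0)

lemma cmod_ri: "cmod (complex_of_real a + \<i> * complex_of_real b) ^ 2 = a^2 + b^2"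
  by (simp add: cmod_power2)

lemma sigma_grad_e0:
  "norm (sigma_grad (\<lambda>k x. g k x *\<^sub>R e0) x) ^ 2 = (g 1 x)^2 + (g 2 x)^2 + (g 3 x)^2"
proof -
  have "sigma_grad (\<lambda>k x. g k x *\<^sub>R e0) x = vector [complex_of_real (g 3 x), complex_of_real (g 1 x) + \<i> * complex_of_real (g 2 x)]"
    unfolding sigma_grad_def pauli_def e0_def
    by (simp add: sum_3 vec_eq_iff forall_2 matrix_vector_mult_def sum_2) (simp add: scaleR_conv_of_real)
  then show ?thesis
    unfolding norm_vec_def L2_set_def
    by (simp add: sum_2 cmod_ri sum_nonneg)
qed

lemma cont_compact_integrable:
  fixes f :: "'a::euclidean_space \<Rightarrow> real"
  assumes "continuous_on UNIV f" "\<And>x. norm x > R \<Longrightarrow> f x = 0"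
  shows "integrable lborel f"
proof -
  have "integrable lborel (\<lambda>x. indicator (cball 0 R) x *\<^sub>R f x)"
    by (rule borel_integrable_compact) (auto intro: continuous_on_subset[OF assms(1)])
  moreover have "(\<lambda>x. indicator (cball 0 R) x *\<^sub>R f x) = f"
    using assms(2) by (auto simp: indicator_def fun_eq_iff not_le)
  ultimately show ?thesis by simp
qed

lemma translate_integral:
  fixes f :: "'a::euclidean_space \<Rightarrow> real"
  assumes "f \<in> borel_measurable borel"
  shows "(\<integral>x. f (v + x) \<partial>lborel) = (\<integral>x. f x \<partial>lborel)"
proof -
  have "(\<integral>x. f x \<partial>lborel) = (\<integral>x. f x \<partial>(distr lborel borel ((+) v)))"
    by (simp add: lborel_distr_plus)
  also have "\<dots> = (\<integral>x. f (v + x) \<partial>lborel)"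
    using assms by (subst integral_distr) auto
  finally show ?thesis by simp
qed

lemma ibp_zero:
  fixes h :: "'a::euclidean_space \<Rightarrow> real" and h' :: "'a \<Rightarrow> 'a \<Rightarrow> real"
  assumes deriv: "\<And>x. (h has_derivative h' x) (at x)"
   and cont: "continuous_on UNIV (\<lambda>x. h' x e)"
   and ne: "norm e = 1"
   and supp: "\<And>x. norm x > R \<Longrightarrow> h x = 0"
  shows "integral\<^sup>L lborel (\<lambda>x. h' x e) = 0"
proof -
  have hc: "continuous_on UNIV h"
    using deriv by (meson continuous_on_eq_continuous_within has_derivative_continuous)
  have hm[measurable]: "h \<in> borel_measurable borel"
    using hc by (rule borel_measurable_continuous_onI)
  have hi: "integrable lborel h" by (rule cont_compact_integrable[OF hc supp])
  have pm[measurable]: "(\<lambda>x. h' x e) \<in> borel_measurable borel"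
    using cont by (rule borel_measurable_continuous_onI)
  have R0: "R \<ge> 0 \<or> True" by simp
  obtain M where M: "\<And>y. y \<in> cball 0 (\<bar>R\<bar> + 2) \<Longrightarrow> \<bar>h' y e\<bar> \<le> M"
  proof -
    have "compact (cball (0::'a) (\<bar>R\<bar> + 2))" by simp
    then have "bounded ((\<lambda>x. h' x e) ` cball 0 (\<bar>R\<bar> + 2))"
      by (intro compact_imp_bounded compact_continuous_image continuous_on_subset[OF cont]) auto
    then obtain B where "\<forall>z\<in>(\<lambda>x. h' x e) ` cball 0 (\<bar>R\<bar> + 2). norm z \<le> B"
      unfolding bounded_iff by blast
    then show ?thesis by (intro that[of B]) auto
  qed
  define s where "s T x = T * (h (x + (1/T) *\<^sub>R e) - h x)" for T x
  have line: "DERIV (\<lambda>t. h (x + t *\<^sub>R e)) t :> h' (x + t *\<^sub>R e) e" for x t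
  proof -
    have "((\<lambda>t. h (x + t *\<^sub>R e)) has_derivative (\<lambda>u. h' (x + t *\<^sub>R e) (u *\<^sub>R e))) (at t)"
      by (rule has_derivative_compose[OF _ deriv], auto intro!: derivative_eq_intros)
    moreover have "linear (h' (x + t *\<^sub>R e))"
      using deriv has_derivative_linear by blast
    ultimately show ?thesis
      unfolding has_field_derivative_def
      by (simp add: linear_scale mult_commute_abs)
  qed
  have lim: "((\<lambda>T. s T x) \<longlongrightarrow> h' x e) at_top" for x
  proof -
    have "((\<lambda>t. (h (x + t *\<^sub>R e) - h x) / t) \<longlongrightarrow> h' x e) (at 0)"
      using line[of x 0] unfolding DERIV_def by simp
    moreover have "filterlim (\<lambda>T::real. 1/T) (at 0) at_top"
      unfolding filterlim_at
      using tendsto_inverse_0_at_top[OF filterlim_ident]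
      by (auto simp: inverse_eq_divide eventually_at_top_linorder intro: exI[of _ 1])
    ultimately have "((\<lambda>T. (h (x + (1/T) *\<^sub>R e) - h x) / (1/T)) \<longlongrightarrow> h' x e) at_top"
      by (rule filterlim_compose)
    then show ?thesis unfolding s_def by (simp add: mult.commute)
  qed
  have bound: "norm (s T x) \<le> M * indicator (cball 0 (\<bar>R\<bar> + 1)) x" if T: "T \<ge> 1" for T x
  proof (cases "x \<in> cball 0 (\<bar>R\<bar> + 1)")
    case True
    have T0: "0 < 1/T" using T by simp
    from MVT2[OF T0, of "\<lambda>t. h (x + t *\<^sub>R e)" "\<lambda>t. h' (x + t *\<^sub>R e) e"] line
    obtain z where z: "0 < z" "z < 1/T" "h (x + (1/T) *\<^sub>R e) - h x = (1/T) * h' (x + z *\<^sub>R e) e"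
      by auto
    have "1/T \<le> 1" using T by simp
    then have z1: "z < 1" using z by linarith
    have "norm (x + z *\<^sub>R e) \<le> norm x + z * norm e"
      using norm_triangle_ineq[of x "z *\<^sub>R e"] z by simp
    also have "\<dots> \<le> \<bar>R\<bar> + 2" using True z1 ne by simp
    finally have "\<bar>h' (x + z *\<^sub>R e) e\<bar> \<le> M" by (intro M) auto
    then show ?thesis using True T z unfolding s_def by (simp add: z(3))
  next
    case False
    have "norm (x + (1/T) *\<^sub>R e) \<ge> norm x - (1/T) * norm e"
      using norm_triangle_ineq2[of x "- ((1/T) *\<^sub>R e)"] T by simp
    moreover have "1/T \<le> 1" using T by simp
    ultimately have "norm (x + (1/T) *\<^sub>R e) > \<bar>R\<bar>" using False ne
      by simp
    then have "h (x + (1/T) *\<^sub>R e) = 0" "h x = 0" using supp False by auto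
    then show ?thesis using False unfolding s_def by simp
  qed
  have ti: "integrable lborel (\<lambda>x. h (x + v))" for v
  proof (rule cont_compact_integrable[where R="\<bar>R\<bar> + norm v"])
    show "continuous_on UNIV (\<lambda>x. h (x + v))"
      by (rule continuous_on_compose2[OF hc]) (auto intro!: continuous_intros)
    fix x :: 'a assume "\<bar>R\<bar> + norm v < norm x"
    moreover have "norm x \<le> norm (x + v) + norm v"
      using norm_triangle_ineq4[of "x + v" v] by simp
    ultimately show "h (x + v) = 0" by (intro supp) simp
  qed
  have sint: "integral\<^sup>L lborel (s T) = 0" for T
  proof -
    have "integral\<^sup>L lborel (s T) = T * (\<integral>x. h (x + (1/T) *\<^sub>R e) - h x \<partial>lborel)"
      unfolding s_def by (rule integral_mult_right_zero)
    also have "\<dots> = T * ((\<integral>x. h (x + (1/T) *\<^sub>R e) \<partial>lborel) - integral\<^sup>L lborel h)"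
      using Bochner_Integration.integral_diff[OF ti[of "(1/T) *\<^sub>R e"] hi] by simp
    also have "(\<integral>x. h (x + (1/T) *\<^sub>R e) \<partial>lborel) = integral\<^sup>L lborel h"
      using translate_integral[OF hm, of "(1/T) *\<^sub>R e"] by (simp add: add.commute)
    finally show ?thesis by simp
  qed
  have sm: "s T \<in> borel_measurable borel" for T
  proof -
    have "s T = (\<lambda>x. T * (h (x + (1/T) *\<^sub>R e) - h x))" by (simp add: s_def fun_eq_iff)
    then show ?thesis
      using ti[of "(1/T) *\<^sub>R e", THEN borel_measurable_integrable] hm
      by (auto intro!: borel_measurable_times borel_measurable_diff)
  qed
  have "((\<lambda>T. integral\<^sup>L lborel (s T)) \<longlongrightarrow> integral\<^sup>L lborel (\<lambda>x. h' x e)) at_top"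
  proof (rule integral_dominated_convergence_at_top[where w="\<lambda>x. M * indicator (cball 0 (\<bar>R\<bar> + 1)) x"])
    show "integrable lborel (\<lambda>x. M * indicator (cball 0 (\<bar>R\<bar> + 1)) x)"
      by (intro integrable_mult_right integrable_real_indicator emeasure_compact_finite) auto
    show "AE x in lborel. ((\<lambda>i. s i x) \<longlongrightarrow> h' x e) at_top" using lim by simp
    show "\<forall>\<^sub>F i in at_top. AE x in lborel. norm (s i x) \<le> M * indicator (cball 0 (\<bar>R\<bar> + 1)) x"
      using bound by (auto simp: eventually_at_top_linorder)
  qed (use sm in auto)
  then show ?thesis using sint by (simp add: LIMSEQ_const_iff tendsto_const_iff)
qed


lemma test_fun_facts:
  assumes "test_function \<psi>"
  shows "\<And>x. (\<psi> has_derivative frechet_derivative \<psi> (at x)) (at x)"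
    and "continuous_on UNIV (\<lambda>x. frechet_derivative \<psi> (at x) (axis k 1))"
    and "\<exists>R. \<forall>x. norm x > R \<longrightarrow> \<psi> x = 0"
proof -
  have sm: "\<And>ks x. iter_partial ks \<psi> differentiable (at x)"
    using assms unfolding test_function_def smooth_fun_def by auto
  show "\<And>x. (\<psi> has_derivative frechet_derivative \<psi> (at x)) (at x)"
    using sm[of "[]"] by (simp add: frechet_derivative_works)
  have "(\<lambda>x. frechet_derivative \<psi> (at x) (axis k 1)) differentiable (at x)" for x
    using sm[of "[k]" x] by simp
  then show "continuous_on UNIV (\<lambda>x. frechet_derivative \<psi> (at x) (axis k 1))"
    by (simp add: differentiable_imp_continuous_within continuous_on_eq_continuous_within)
  show "\<exists>R. \<forall>x. norm x > R \<longrightarrow> \<psi> x = 0"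
    using assms unfolding test_function_def by auto
qed

lemma deriv_zero_outside:
  fixes f :: "'a::euclidean_space \<Rightarrow> real"
  assumes d: "(f has_derivative f') (at x)" and z: "\<And>y. norm y > R \<Longrightarrow> f y = 0" and x: "norm x > R"
  shows "f' v = 0"
proof -
  have "((\<lambda>_. 0) has_derivative (\<lambda>_. 0)) (at x)" by simp
  then have "(f has_derivative (\<lambda>_. 0)) (at x)"
    by (rule has_derivative_transform_within_open[where s="- cball 0 R"]) (use x z in auto)
  then have "f' = (\<lambda>_. 0)" using d has_derivative_unique by blast
  then show ?thesis by simp
qed

lemma weak_real:
  fixes u :: "real^3 \<Rightarrow> real"
  assumes tf: "test_function \<psi>" and ud: "\<And>x. (u has_derivative u' x) (at x)"
    and uc: "continuous_on UNIV (\<lambda>x. u' x (axis k 1))"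
  shows "(\<integral>x. frechet_derivative \<psi> (at x) (axis k 1) * u x \<partial>lborel)
       = - (\<integral>x. \<psi> x * u' x (axis k 1) \<partial>lborel)"
    and "integrable lborel (\<lambda>x. frechet_derivative \<psi> (at x) (axis k 1) * u x)"
    and "integrable lborel (\<lambda>x. \<psi> x * u' x (axis k 1))"
proof -
  note pd = test_fun_facts(1)[OF tf] and pc = test_fun_facts(2)[OF tf, of k]
  obtain R where R: "\<And>x. norm x > R \<Longrightarrow> \<psi> x = 0" using test_fun_facts(3)[OF tf] by auto
  define e :: "real^3" where "e = axis k 1"
  have psic: "continuous_on UNIV \<psi>"
    using pd by (meson continuous_on_eq_continuous_within has_derivative_continuous)
  have uco: "continuous_on UNIV u"
    using ud by (meson continuous_on_eq_continuous_within has_derivative_continuous)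
  have hd: "((\<lambda>x. \<psi> x * u x) has_derivative (\<lambda>v. \<psi> x * u' x v + frechet_derivative \<psi> (at x) v * u x)) (at x)" for x
    by (rule has_derivative_mult[OF pd ud])
  have c1: "continuous_on UNIV (\<lambda>x. \<psi> x * u' x e)"
    unfolding e_def by (intro continuous_intros psic uc)
  have c2: "continuous_on UNIV (\<lambda>x. frechet_derivative \<psi> (at x) e * u x)"
    unfolding e_def by (intro continuous_intros pc uco)
  have i1: "integrable lborel (\<lambda>x. \<psi> x * u' x e)"
    by (rule cont_compact_integrable[OF c1, of R]) (simp add: R)
  have i2: "integrable lborel (\<lambda>x. frechet_derivative \<psi> (at x) e * u x)"
    by (rule cont_compact_integrable[OF c2, of R]) (simp add: deriv_zero_outside[OF pd R])
  have "integral\<^sup>L lborel (\<lambda>x. \<psi> x * u' x e + frechet_derivative \<psi> (at x) e * u x) = 0"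
    by (rule ibp_zero[OF hd, where R=R]) (auto simp: e_def R deriv_zero_outside[OF pd R] intro!: continuous_intros psic uco uc pc)
  then have "integral\<^sup>L lborel (\<lambda>x. \<psi> x * u' x e) + integral\<^sup>L lborel (\<lambda>x. frechet_derivative \<psi> (at x) e * u x) = 0"
    by (simp add: Bochner_Integration.integral_add[OF i1 i2])
  then show "(\<integral>x. frechet_derivative \<psi> (at x) (axis k 1) * u x \<partial>lborel)
       = - (\<integral>x. \<psi> x * u' x (axis k 1) \<partial>lborel)" unfolding e_def by linarith
  show "integrable lborel (\<lambda>x. frechet_derivative \<psi> (at x) (axis k 1) * u x)" using i2 e_def by simp
  show "integrable lborel (\<lambda>x. \<psi> x * u' x (axis k 1))" using i1 e_def by simp
qed

lemma weak_e0:
  fixes u :: "real^3 \<Rightarrow> real"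
  assumes ud: "\<And>x. (u has_derivative u' x) (at x)"
    and uc: "continuous_on UNIV (\<lambda>x. u' x (axis k 1))"
  shows "weak_partial k (\<lambda>x. u x *\<^sub>R e0) (\<lambda>x. u' x (axis k 1) *\<^sub>R e0)"
  unfolding weak_partial_def
proof (intro allI impI)
  fix \<psi> assume tf: "test_function \<psi>"
  note W = weak_real[OF tf ud uc]
  have "(\<integral>x. frechet_derivative \<psi> (at x) (axis k 1) *\<^sub>R u x *\<^sub>R e0 \<partial>lborel)
      = (\<integral>x. (frechet_derivative \<psi> (at x) (axis k 1) * u x) *\<^sub>R e0 \<partial>lborel)" by simp
  also have "\<dots> = (\<integral>x. frechet_derivative \<psi> (at x) (axis k 1) * u x \<partial>lborel) *\<^sub>R e0"
    using W(2) by (rule integral_scaleR_left)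
  also have "\<dots> = - ((\<integral>x. \<psi> x * u' x (axis k 1) \<partial>lborel) *\<^sub>R e0)" using W(1) by simp
  also have "(\<integral>x. \<psi> x * u' x (axis k 1) \<partial>lborel) *\<^sub>R e0 = (\<integral>x. (\<psi> x * u' x (axis k 1)) *\<^sub>R e0 \<partial>lborel)"
    using W(3) by (rule integral_scaleR_left[symmetric])
  also have "\<dots> = (\<integral>x. \<psi> x *\<^sub>R u' x (axis k 1) *\<^sub>R e0 \<partial>lborel)" by simp
  finally show "(\<integral>x. frechet_derivative \<psi> (at x) (axis k 1) *\<^sub>R u x *\<^sub>R e0 \<partial>lborel) =
         - (\<integral>x. \<psi> x *\<^sub>R u' x (axis k 1) *\<^sub>R e0 \<partial>lborel)" .
qed

definition pos2 :: "real \<Rightarrow> real" where "pos2 y = (max 0 y)^2"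

lemma pos2_deriv: "(pos2 has_real_derivative (2 * max 0 y)) (at y)"
proof -
  consider "y > 0" | "y < 0" | "y = 0" by linarith
  then show ?thesis
  proof cases
    case 1
    have "((\<lambda>y. y^2) has_real_derivative 2 * max 0 y) (at y)"
      using 1 by (auto intro!: derivative_eq_intros)
    then show ?thesis
      by (rule has_field_derivative_transform_within_open[where S="{0<..}"]) (use 1 in \<open>auto simp: pos2_def\<close>)
  next
    case 2
    have "((\<lambda>y. 0) has_real_derivative 2 * max 0 y) (at y)" using 2 by simp
    then show ?thesis
      by (rule has_field_derivative_transform_within_open[where S="{..<0}"]) (use 2 in \<open>auto simp: pos2_def\<close>)
  next
    case 3
    have "((\<lambda>h. (pos2 (0 + h) - pos2 0) / h) \<longlongrightarrow> 0) (at 0)"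
    proof (rule Lim_null_comparison[where g="\<lambda>h. \<bar>h\<bar>"])
      show "\<forall>\<^sub>F x in at 0. norm ((pos2 (0 + x) - pos2 0) / x) \<le> \<bar>x\<bar>"
        by (auto simp: pos2_def power2_eq_square abs_mult max_def)
      show "((\<lambda>h. \<bar>h\<bar>) \<longlongrightarrow> (0::real)) (at 0)"
        by (auto intro!: tendsto_eq_intros)
    qed
    then show ?thesis using 3 unfolding DERIV_def by simp
  qed
qed

lemma pos2_nonneg: "pos2 y \<ge> 0" by (simp add: pos2_def)

definition rho :: "nat \<Rightarrow> real \<Rightarrow> real" where
  "rho n t = 8 * pos2 (1 - t) + real n * pos2 (1/2 - t)"
definition rho' :: "nat \<Rightarrow> real \<Rightarrow> real" where
  "rho' n t = - (16 * max 0 (1 - t)) - real n * (2 * max 0 (1/2 - t))"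

lemma rho_deriv: "(rho n has_real_derivative rho' n t) (at t)"
  unfolding rho_def[abs_def] rho'_def
  by (auto intro!: derivative_eq_intros DERIV_chain2[OF pos2_deriv])

lemma rho_nonneg: "rho n t \<ge> 0"
  by (simp add: rho_def pos2_nonneg)

lemma rho_out: "t \<ge> 1 \<Longrightarrow> rho n t = 0 \<and> rho' n t = 0"
  by (simp add: rho_def rho'_def pos2_def max_def)

lemma cont_rho: "continuous_on UNIV (rho n)" and cont_rho': "continuous_on UNIV (rho' n)"
  unfolding rho_def[abs_def] rho'_def[abs_def] pos2_def
  by (auto intro!: continuous_intros)

definition W :: "nat \<Rightarrow> real \<Rightarrow> real" where "W n t = 1 + (rho n t - 1)^3"
definition W' :: "nat \<Rightarrow> real \<Rightarrow> real" where "W' n t = 3 * (rho n t - 1)^2 * rho' n t"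

lemma W_deriv: "(W n has_real_derivative W' n t) (at t)"
  unfolding W_def[abs_def] W'_def
  by (auto intro!: derivative_eq_intros rho_deriv)

lemma cont_W: "continuous_on UNIV (W n)" and cont_W': "continuous_on UNIV (W' n)"
  unfolding W_def[abs_def] W'_def[abs_def]
  by (auto intro!: continuous_intros cont_rho cont_rho')

lemma W_out: "t \<ge> 1 \<Longrightarrow> W n t = 0 \<and> W' n t = 0"
  by (simp add: W_def W'_def rho_out)

definition Rt :: "nat \<Rightarrow> real \<Rightarrow> real" where
  "Rt n t = - 9 * (rho n t - 1) * (rho' n t)^2 / (2 + (rho n t - 1)^3)"

lemma den_ge1: "2 + (rho n t - 1)^3 \<ge> 1"
proof -
  have "rho n t - 1 \<ge> -1" using rho_nonneg[of n t] by simp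
  then have "(rho n t - 1)^3 \<ge> (-1)^3" by (intro power_mono_odd) auto
  then show ?thesis by simp
qed

lemma cont_Rt: "continuous_on UNIV (Rt n)"
  unfolding Rt_def[abs_def]
proof (intro continuous_intros cont_rho cont_rho')
  show "\<forall>t\<in>UNIV. 2 + (rho n t - 1) ^ 3 \<noteq> 0"
    using den_ge1[of n] by (smt (verit))
qed

lemma Rt_out: "t \<ge> 1 \<Longrightarrow> Rt n t = 0"
  by (simp add: Rt_def rho_out)

lemma Rt_eq: "(W' n t)^2 / (1 - (W n t)^2) = Rt n t"
proof -
  define a where "a = rho n t - 1"
  define p where "p = rho' n t"
  have d: "2 + a^3 \<ge> 1" using den_ge1[of n t] by (simp add: a_def)
  have "(W' n t)^2 / (1 - (W n t)^2) = (9 * a^4 * p^2) / (- (a^3 * (2 + a^3)))"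
    unfolding W'_def W_def a_def[symmetric] p_def[symmetric]
    by (simp add: power2_eq_square algebra_simps power_numeral_reduce)
  also have "\<dots> = - 9 * a * p^2 / (2 + a^3)"
  proof (cases "a = 0")
    case True then show ?thesis by simp
  next
    case False
    then have a3: "a^3 \<noteq> 0" by simp
    have "(9 * a^4 * p^2) / (- (a^3 * (2 + a^3))) = (a^3 * (9 * a * p^2)) / (a^3 * (- (2 + a^3)))"
      by (simp add: power_numeral_reduce algebra_simps)
    also have "\<dots> = (9 * a * p^2) / (- (2 + a^3))"
      using a3 by (rule mult_divide_mult_cancel_left)
    also have "\<dots> = - 9 * a * p^2 / (2 + a^3)"
      by (simp only: divide_minus_right)
    finally show ?thesis .
  qed
  finally show ?thesis by (simp add: Rt_def a_def p_def)
qed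


lemma div_ge1_le: "(x::real) \<ge> 0 \<Longrightarrow> d \<ge> 1 \<Longrightarrow> x / d \<le> x"
  by (simp add: divide_le_eq mult_le_cancel_left1 order_trans)

lemma tRt_bound: assumes t: "t \<ge> 0" shows "4 * t * Rt n t \<le> 2304 * (if t \<le> 1 then 1 else 0)"
proof -
  define a where "a = rho n t - 1"
  define p where "p = rho' n t"
  define d where "d = 2 + a^3"
  have d: "d \<ge> 1" using den_ge1[of n t] by (simp add: a_def d_def)
  have a1: "a \<ge> -1" using rho_nonneg[of n t] by (simp add: a_def)
  have R: "Rt n t = (- 9 * a * p^2) / d" by (simp add: Rt_def a_def p_def d_def)
  have nonpos: "Rt n t \<le> 0" if "a \<ge> 0"
  proof -
    have "- 9 * a * p^2 \<le> 0" using that by (simp add: mult_nonneg_nonneg)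
    then show ?thesis using d by (simp add: R divide_nonpos_pos)
  qed
  consider "t > 1" | "t < 1/2" | "1/2 \<le> t" "t \<le> 1" by linarith
  then show ?thesis
  proof cases
    case 1 then show ?thesis by (simp add: Rt_out)
  next
    case 2
    have "pos2 (1 - t) \<ge> 1/4" using 2 t mult_mono[of "1/2" "1-t" "1/2" "1-t"] unfolding pos2_def
      by (simp add: max_def power2_eq_square)
    moreover have "real n * pos2 (1/2 - t) \<ge> 0" using pos2_nonneg[of "1/2 - t"] by simp
    ultimately have "rho n t \<ge> 2" unfolding rho_def by linarith
    then have "Rt n t \<le> 0" by (intro nonpos) (simp add: a_def)
    then have "t * Rt n t \<le> 0" using t by (simp add: mult_nonneg_nonpos)
    then show ?thesis by auto
  next
    case 3
    have p: "p = - 16 * (1 - t)" using 3 by (simp add: p_def rho'_def max_def)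
    have p2: "p^2 \<le> 64"
    proof -
      have "\<bar>p\<bar> \<le> 8" using p 3 by simp
      then have "\<bar>p\<bar>^2 \<le> 8^2" by (intro power_mono) auto
      then show ?thesis by simp
    qed
    show ?thesis
    proof (cases "a \<ge> 0")
      case True
      then have "t * Rt n t \<le> 0" using nonpos t by (simp add: mult_nonneg_nonpos)
      then show ?thesis by auto
    next
      case False
      have num: "0 \<le> - 9 * a * p^2" using False by (simp add: mult_nonpos_nonneg)
      have "(-a) * (9 * p^2) \<le> 1 * (9 * p^2)" using a1
        by (intro mult_right_mono) auto
      then have "- 9 * a * p^2 \<le> 9 * p^2" by (simp add: algebra_simps)
      then have "- 9 * a * p^2 \<le> 576" using p2 by linarith
      moreover have "0 \<le> (- 9 * a * p^2) / d" using num d by (intro divide_nonneg_nonneg) auto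
      ultimately have "Rt n t \<le> 576" "Rt n t \<ge> 0" using div_ge1_le[OF num d] unfolding R by linarith+
      then have "4 * t * Rt n t \<le> 4 * 1 * 576" using 3 t by (intro mult_mono) auto
      then show ?thesis using 3 by simp
    qed
  qed
qed

lemma pos2_le1: "t \<ge> 0 \<Longrightarrow> pos2 (1 - t) \<le> 1"
  by (simp add: pos2_def max_def power_le_one)
lemma pos2_le1': "t \<ge> 0 \<Longrightarrow> pos2 (1/2 - t) \<le> 1"
  by (simp add: pos2_def max_def power_le_one)

lemma W_bounds: assumes t: "t \<ge> 0" shows "0 \<le> W n t" "W n t \<le> (8 + real n)^3"
proof -
  define a where "a = rho n t - 1"
  have a1: "a \<ge> -1" using rho_nonneg[of n t] by (simp add: a_def)
  have "real n * pos2 (1/2 - t) \<le> real n * 1" using pos2_le1'[OF t] by (intro mult_left_mono) auto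
  then have "rho n t \<le> 8 + real n"
    unfolding rho_def using pos2_le1[OF t] by simp
  then have a2: "a \<le> 7 + real n" by (simp add: a_def)
  have "a^3 \<ge> (-1)^3" using a1 by (intro power_mono_odd) auto
  then show "0 \<le> W n t" unfolding W_def a_def[symmetric] by simp
  have "a^3 \<le> (7 + real n)^3" using a2 by (intro power_mono_odd) auto
  moreover have "(7 + real n)^3 + 1 \<le> (8 + real n)^3"
    by (simp add: power3_eq_cube algebra_simps)
  ultimately show "W n t \<le> (8 + real n)^3" unfolding W_def a_def[symmetric] by linarith
qed

lemma W_low: assumes t: "0 \<le> t" "t \<le> 1/4" shows "W n t \<ge> ((32 + real n)/32)^3" "W n t \<ge> 1"
proof -
  have "pos2 (1 - t) \<ge> 9/16" using t mult_mono[of "3/4" "1-t" "3/4" "1-t"] unfolding pos2_def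
    by (simp add: max_def power2_eq_square)
  moreover have "pos2 (1/2 - t) \<ge> 1/16" using t mult_mono[of "1/4" "1/2-t" "1/4" "1/2-t"] unfolding pos2_def
    by (simp add: max_def power2_eq_square)
  then have "real n * pos2 (1/2 - t) \<ge> real n * (1/16)" by (intro mult_left_mono) auto
  ultimately have "rho n t - 1 \<ge> (32 + real n)/32" unfolding rho_def
    by simp
  moreover have "(32 + real n)/32 \<ge> 0" by simp
  ultimately have "(rho n t - 1)^3 \<ge> ((32 + real n)/32)^3" by (intro power_mono) auto
  then show "W n t \<ge> ((32 + real n)/32)^3" unfolding W_def by linarith
  have "((32 + real n)/32)^3 \<ge> 1" by (intro one_le_power) simp
  then show "W n t \<ge> 1" using \<open>W n t \<ge> ((32 + real n)/32)^3\<close> by linarith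
qed

definition J :: "nat \<Rightarrow> real^3 \<Rightarrow> real" where "J n y = 4 * (y \<bullet> y) * Rt n (y \<bullet> y)"
definition w2 :: "nat \<Rightarrow> real^3 \<Rightarrow> real" where "w2 n y = (W n (y \<bullet> y))^2"
definition w4 :: "nat \<Rightarrow> real^3 \<Rightarrow> real" where "w4 n y = (W n (y \<bullet> y))^4"
definition V :: real where "V = measure lborel (cball (0::real^3) 1)"
definition V4 :: real where "V4 = measure lborel (cball (0::real^3) (1/2))"

lemma inner_gt1: "norm (y::real^3) > 1 \<Longrightarrow> y \<bullet> y \<ge> 1"
proof -
  assume "norm y > 1"
  then have "norm y ^ 2 \<ge> 1 ^ 2" by (intro power_mono) auto
  then show ?thesis by (simp add: power2_norm_eq_inner)
qed

lemma inner_le_iff: "r \<ge> 0 \<Longrightarrow> ((y::real^3) \<bullet> y \<le> r^2) = (norm y \<le> r)"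
  by (metis norm_ge_zero power2_norm_eq_inner power2_le_iff_abs_le abs_of_nonneg)

lemma cont_J: "continuous_on UNIV (J n)"
  unfolding J_def[abs_def]
  by (intro continuous_intros continuous_on_compose2[OF cont_Rt]) auto
lemma cont_w2: "continuous_on UNIV (w2 n)" and cont_w4: "continuous_on UNIV (w4 n)"
  unfolding w2_def[abs_def] w4_def[abs_def]
  by (intro continuous_intros continuous_on_compose2[OF cont_W]; auto)+

lemma J_out: "norm y > 1 \<Longrightarrow> J n y = 0"
  using inner_gt1 Rt_out by (simp add: J_def)
lemma w_out: "norm y > 1 \<Longrightarrow> w2 n y = 0" "norm y > 1 \<Longrightarrow> w4 n y = 0"
  using inner_gt1 W_out by (simp_all add: w2_def w4_def)

lemma int_J: "integrable lborel (J n)"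
  by (rule cont_compact_integrable[OF cont_J]) (rule J_out)
lemma int_w2: "integrable lborel (w2 n)"
  by (rule cont_compact_integrable[OF cont_w2]) (rule w_out)
lemma int_w4: "integrable lborel (w4 n)"
  by (rule cont_compact_integrable[OF cont_w4]) (rule w_out)

lemma int_ind: "integrable lborel (indicator (cball (0::real^3) r) :: real^3 \<Rightarrow> real)"
  by (intro integrable_real_indicator emeasure_compact_finite) auto

lemma J_bound: "J n y \<le> 2304 * indicator (cball 0 1) y"
proof -
  have "J n y \<le> 2304 * (if y \<bullet> y \<le> 1 then 1 else 0)"
    unfolding J_def using tRt_bound[of "y \<bullet> y" n] by simp
  also have "\<dots> = 2304 * indicator (cball 0 1) y"
    using inner_le_iff[of 1 y] by (simp add: indicator_def)
  finally show ?thesis .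
qed

lemma w2_upper: "w2 n y \<le> (8 + real n)^6 * indicator (cball 0 1) y"
proof (cases "norm y \<le> 1")
  case True
  have "W n (y \<bullet> y) ^ 2 \<le> ((8 + real n)^3)^2"
    using W_bounds[of "y \<bullet> y" n] by (intro power_mono) auto
  then show ?thesis using True by (simp add: w2_def power_mult[symmetric])
next
  case False then show ?thesis using w_out by simp
qed

lemma w_lower: "w2 n y \<ge> indicator (cball 0 (1/2)) y"
  "w4 n y \<ge> ((32 + real n)/32)^12 * indicator (cball 0 (1/2)) y"
proof -
  have "w2 n y \<ge> indicator (cball 0 (1/2)) y \<and> w4 n y \<ge> ((32 + real n)/32)^12 * indicator (cball 0 (1/2)) y"
  proof (cases "norm y \<le> 1/2")
    case True
    then have t: "y \<bullet> y \<le> 1/4" using inner_le_iff[of "1/2" y] by (simp add: power2_eq_square)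
    have l1: "W n (y \<bullet> y) \<ge> 1" and l2: "W n (y \<bullet> y) \<ge> ((32 + real n)/32)^3"
      using W_low[of "y \<bullet> y" n] t by auto
    have "1 \<le> W n (y \<bullet> y) ^ 2" using l1 by (simp add: one_le_power)
    moreover have "(((32 + real n)/32)^3)^4 \<le> W n (y \<bullet> y) ^ 4"
      using l2 by (intro power_mono) auto
    ultimately show ?thesis using True by (simp add: w2_def w4_def power_mult[symmetric])
  next
    case False
    then show ?thesis by (simp add: w2_def w4_def)
  qed
  then show "w2 n y \<ge> indicator (cball 0 (1/2)) y"
    "w4 n y \<ge> ((32 + real n)/32)^12 * indicator (cball 0 (1/2)) y" by auto
qed

lemma V4_pos: "V4 > 0"
proof -
  have "0 < measure lborel (ball (0::real^3) (1/2))" using content_ball_pos[of "1/2" "0::real^3"] by simp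
  also have "\<dots> \<le> V4" unfolding V4_def
    by (intro measure_mono_fmeasurable fmeasurable_compact) auto
  finally show ?thesis .
qed

lemma V4_le_V: "V4 \<le> V"
  unfolding V4_def V_def
  by (intro measure_mono_fmeasurable fmeasurable_compact) auto

lemma Q2_bounds: "integral\<^sup>L lborel (w2 n) \<ge> V4" "integral\<^sup>L lborel (w2 n) \<le> (8 + real n)^6 * V"
proof -
  have "V4 = integral\<^sup>L lborel (indicator (cball (0::real^3) (1/2)) :: real^3 \<Rightarrow> real)"
    by (simp add: V4_def)
  also have "\<dots> \<le> integral\<^sup>L lborel (w2 n)"
    by (intro integral_mono int_ind int_w2 w_lower)
  finally show "integral\<^sup>L lborel (w2 n) \<ge> V4" .
  have "integral\<^sup>L lborel (w2 n) \<le> integral\<^sup>L lborel (\<lambda>y. (8 + real n)^6 * indicator (cball (0::real^3) 1) y)"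
    by (intro integral_mono int_ind int_w2 w2_upper integrable_mult_right)
  also have "\<dots> = (8 + real n)^6 * V" by (simp add: V_def)
  finally show "integral\<^sup>L lborel (w2 n) \<le> (8 + real n)^6 * V" .
qed

lemma Q4_lower: "integral\<^sup>L lborel (w4 n) \<ge> ((32 + real n)/32)^12 * V4"
proof -
  have "((32 + real n)/32)^12 * V4 = integral\<^sup>L lborel (\<lambda>y. ((32 + real n)/32)^12 * indicator (cball (0::real^3) (1/2)) y)"
    by (simp add: V4_def)
  also have "\<dots> \<le> integral\<^sup>L lborel (w4 n)"
    by (intro integral_mono int_ind int_w4 w_lower integrable_mult_right)
  finally show ?thesis .
qed

lemma IJ_upper: "integral\<^sup>L lborel (J n) \<le> 2304 * V"
proof -
  have "integral\<^sup>L lborel (J n) \<le> integral\<^sup>L lborel (\<lambda>y. 2304 * indicator (cball (0::real^3) 1) y)"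
    by (intro integral_mono int_ind int_J J_bound integrable_mult_right)
  also have "\<dots> = 2304 * V" by (simp add: V_def)
  finally show ?thesis .
qed

lemma nn_integral_dil:
  fixes c :: real and f :: "'a::euclidean_space \<Rightarrow> ennreal"
  assumes [measurable]: "f \<in> borel_measurable borel" and c: "c \<noteq> 0"
  shows "(\<integral>\<^sup>+x. f x \<partial>lborel) = \<bar>c\<bar>^DIM('a) * (\<integral>\<^sup>+x. f (c *\<^sub>R x) \<partial>lborel)"
  by (subst lborel_affine[OF c, of 0])
     (simp add: nn_integral_density nn_integral_distr nn_integral_cmult)

lemma integrable_dil:
  fixes f :: "'a::euclidean_space \<Rightarrow> 'b :: {banach, second_countable_topology}"
  assumes f: "integrable lborel f" and c: "c \<noteq> 0"
  shows "integrable lborel (\<lambda>x. f (c *\<^sub>R x))"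
  using f f[THEN borel_measurable_integrable] unfolding integrable_iff_bounded
  by (subst (asm) nn_integral_dil[where c=c]) (auto simp: ennreal_mult_less_top c)

lemma integrable_dil_iff:
  fixes f :: "'a::euclidean_space \<Rightarrow> 'b :: {banach, second_countable_topology}"
  shows "c \<noteq> 0 \<Longrightarrow> integrable lborel (\<lambda>x. f (c *\<^sub>R x)) \<longleftrightarrow> integrable lborel f"
  using integrable_dil[of f c] integrable_dil[of "\<lambda>x. f (c *\<^sub>R x)" "1/c"]
  by auto

lemma integral_dil:
  fixes f :: "'a::euclidean_space \<Rightarrow> 'b :: {banach, second_countable_topology}" and c :: real
  assumes c: "c \<noteq> 0" shows "(\<integral>x. f x \<partial> lborel) = \<bar>c\<bar>^DIM('a) *\<^sub>R (\<integral>x. f (c *\<^sub>R x) \<partial>lborel)"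
proof cases
  assume f[measurable]: "integrable lborel f" then show ?thesis
    using c f f[THEN borel_measurable_integrable] integrable_dil[OF f c]
    by (subst lborel_affine[OF c, of 0])
       (simp add: integral_density integral_distr)
next
  assume "\<not> integrable lborel f" with c show ?thesis
    by (simp add: integrable_dil_iff not_integrable_integral_eq)
qed


lemma dil3:
  fixes f :: "real^3 \<Rightarrow> real"
  assumes c: "c > 0"
  shows "(\<integral>x. f (c *\<^sub>R x) \<partial>lborel) = integral\<^sup>L lborel f / c^3"
  using integral_dil[of c f] c by simp

definition lam :: "nat \<Rightarrow> real" where "lam n = root 3 (integral\<^sup>L lborel (w2 n))"

lemma lam_pos: "lam n > 0" and lam_cube: "lam n ^ 3 = integral\<^sup>L lborel (w2 n)"
  and lam_ge: "lam n \<ge> root 3 V4"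
proof -
  have q: "integral\<^sup>L lborel (w2 n) > 0" using Q2_bounds(1)[of n] V4_pos by linarith
  then show "lam n > 0" unfolding lam_def by simp
  show "lam n ^ 3 = integral\<^sup>L lborel (w2 n)" unfolding lam_def using q by simp
  show "lam n \<ge> root 3 V4" unfolding lam_def using Q2_bounds(1)[of n] by simp
qed

definition uu :: "nat \<Rightarrow> real^3 \<Rightarrow> real" where
  "uu n x = W n (lam n ^ 2 * (x \<bullet> x))"
definition uu' :: "nat \<Rightarrow> real^3 \<Rightarrow> real^3 \<Rightarrow> real" where
  "uu' n x v = W' n (lam n ^ 2 * (x \<bullet> x)) * (lam n ^ 2 * (2 * (x \<bullet> v)))"

lemma uu_deriv: "(uu n has_derivative uu' n x) (at x)"
proof -
  have "((\<lambda>x. W n (lam n ^ 2 * (x \<bullet> x))) has_derivative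
      (\<lambda>v. (lam n ^ 2 * (x \<bullet> v + v \<bullet> x)) * W' n (lam n ^ 2 * (x \<bullet> x)))) (at x)"
    by (rule DERIV_compose_FDERIV[OF W_deriv]) (auto intro!: derivative_eq_intros)
  then show ?thesis
    unfolding uu_def[abs_def] uu'_def[abs_def]
    by (rule has_derivative_eq_rhs) (auto simp: fun_eq_iff inner_commute algebra_simps)
qed

lemma uu'_axis: "uu' n x (axis k 1) = W' n (lam n ^ 2 * (x \<bullet> x)) * (lam n ^ 2 * (2 * x $ k))"
  by (simp add: uu'_def inner_axis)

lemma cont_uu': "continuous_on UNIV (\<lambda>x. uu' n x (axis k 1))"
  unfolding uu'_axis
  by (intro continuous_intros continuous_on_compose2[OF cont_W']) auto

lemma cont_uu: "continuous_on UNIV (uu n)"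
  unfolding uu_def[abs_def]
  by (intro continuous_intros continuous_on_compose2[OF cont_W]) auto

lemma lam_inner: "(lam n *\<^sub>R (x::real^3)) \<bullet> (lam n *\<^sub>R x) = lam n ^ 2 * (x \<bullet> x)"
  by (simp add: power2_eq_square)

lemma big_t: "norm (x::real^3) > 1 / lam n \<Longrightarrow> lam n ^ 2 * (x \<bullet> x) \<ge> 1"
proof -
  assume "norm x > 1 / lam n"
  then have "norm (lam n *\<^sub>R x) > 1" using lam_pos[of n] by (simp add: field_simps)
  then have "(lam n *\<^sub>R x) \<bullet> (lam n *\<^sub>R x) \<ge> 1" by (rule inner_gt1)
  then show ?thesis by (simp only: lam_inner)
qed

lemma uu_out: "norm x > 1 / lam n \<Longrightarrow> uu n x = 0"
  using big_t[where x=x and n=n] W_out[of "lam n ^ 2 * (x \<bullet> x)" n] by (simp add: uu_def)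
lemma uu'_out: "norm x > 1 / lam n \<Longrightarrow> uu' n x v = 0"
  using big_t[where x=x and n=n] W_out[of "lam n ^ 2 * (x \<bullet> x)" n] by (simp add: uu'_def)

definition phi :: "nat \<Rightarrow> real^3 \<Rightarrow> complex^2" where "phi n x = uu n x *\<^sub>R e0"
definition DD :: "nat \<Rightarrow> 3 \<Rightarrow> real^3 \<Rightarrow> complex^2" where "DD n k x = uu' n x (axis k 1) *\<^sub>R e0"

lemma sum_sq3: "(x $ 1)^2 + (x $ 2)^2 + (x $ (3::3))^2 = (x::real^3) \<bullet> x"
  by (simp add: inner_vec_def sum_3 power2_eq_square)

lemma sigma_DD: "norm (sigma_grad (DD n) x) ^ 2 = 4 * lam n ^ 4 * (W' n (lam n ^ 2 * (x \<bullet> x)))^2 * (x \<bullet> x)"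
proof -
  have "norm (sigma_grad (DD n) x) ^ 2 = (uu' n x (axis 1 1))^2 + (uu' n x (axis 2 1))^2 + (uu' n x (axis 3 1))^2"
    unfolding DD_def[abs_def] by (rule sigma_grad_e0)
  also have "\<dots> = 4 * lam n ^ 4 * (W' n (lam n ^ 2 * (x \<bullet> x)))^2 * ((x $ 1)^2 + (x $ 2)^2 + (x $ 3)^2)"
    unfolding uu'_axis by (simp add: power_mult_distrib algebra_simps power2_eq_square power4_eq_xxxx)
  also have "\<dots> = 4 * lam n ^ 4 * (W' n (lam n ^ 2 * (x \<bullet> x)))^2 * (x \<bullet> x)"
    by (simp add: sum_sq3)
  finally show ?thesis .
qed

lemma norm_phi: "norm (phi n x) = \<bar>W n (lam n ^ 2 * (x \<bullet> x))\<bar>"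
  by (simp add: phi_def uu_def norm_e0)

lemma ratio_eq: "norm (sigma_grad (DD n) x) ^ 2 / (1 - norm (phi n x) ^ 2) = lam n ^ 2 * J n (lam n *\<^sub>R x)"
proof -
  define t where "t = lam n ^ 2 * (x \<bullet> x)"
  have "norm (sigma_grad (DD n) x) ^ 2 / (1 - norm (phi n x) ^ 2)
      = (lam n ^ 2 * (4 * t)) * ((W' n t)^2 / (1 - (W n t)^2))"
    unfolding sigma_DD norm_phi t_def[symmetric] by (simp add: t_def power2_eq_square power4_eq_xxxx algebra_simps)
  also have "\<dots> = lam n ^ 2 * J n (lam n *\<^sub>R x)"
    unfolding Rt_eq J_def lam_inner t_def by simp
  finally show ?thesis .
qed

lemma norm_phi2: "norm (phi n x) ^ 2 = w2 n (lam n *\<^sub>R x)"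
  by (simp add: norm_phi w2_def lam_inner del: inner_scaleR_left inner_scaleR_right)
lemma norm_phi4: "norm (phi n x) ^ 4 = w4 n (lam n *\<^sub>R x)"
proof -
  have "norm (phi n x) ^ 4 = \<bar>W n (lam n ^ 2 * (x \<bullet> x))\<bar> ^ 4" by (simp add: norm_phi)
  also have "\<dots> = W n (lam n ^ 2 * (x \<bullet> x)) ^ 4" by (simp add: power_even_abs)
  finally show ?thesis by (simp add: w4_def lam_inner del: inner_scaleR_left inner_scaleR_right)
qed

lemma cont_phi: "continuous_on UNIV (phi n)"
  unfolding phi_def[abs_def] by (intro continuous_intros cont_uu)
lemma cont_DD: "continuous_on UNIV (DD n k)"
  unfolding DD_def[abs_def] by (intro continuous_intros cont_uu')

lemma L2_phi: "L2 (phi n)"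
  unfolding L2_def
proof
  show "phi n \<in> borel_measurable lborel"
    using borel_measurable_continuous_onI[OF cont_phi] by simp
  have "integrable lborel (\<lambda>x. w2 n (lam n *\<^sub>R x))"
    using integrable_dil_iff[of "lam n" "w2 n"] lam_pos[of n] int_w2[of n] by simp
  then show "integrable lborel (\<lambda>x. norm (phi n x) ^ 2)" by (simp add: norm_phi2)
qed

lemma L2_DD: "L2 (DD n k)"
  unfolding L2_def
proof
  show "DD n k \<in> borel_measurable lborel"
    using borel_measurable_continuous_onI[OF cont_DD] by simp
  show "integrable lborel (\<lambda>x. norm (DD n k x) ^ 2)"
  proof (rule cont_compact_integrable[where R="1 / lam n"])
    show "continuous_on UNIV (\<lambda>x. norm (DD n k x) ^ 2)"
      by (intro continuous_intros cont_DD)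
    show "norm (DD n k x) ^ 2 = 0" if "1 / lam n < norm x" for x
      using uu'_out[OF that] by (simp add: DD_def)
  qed
qed

lemma weak_DD: "weak_partial k (phi n) (DD n k)"
  using weak_e0[OF uu_deriv[of n] cont_uu'[of n k]] unfolding phi_def[abs_def] DD_def[abs_def] by simp

lemma W'_at1: assumes t: "t \<ge> 0" and w: "\<bar>W n t\<bar> = 1" shows "W' n t = 0"
proof -
  have "W n t = 1" using W_bounds(1)[OF t, of n] w by simp
  then have "(rho n t - 1)^3 = 0" by (simp add: W_def)
  then have "rho n t - 1 = 0" by simp
  then show ?thesis by (simp add: W'_def)
qed

lemma sigma_zero: "norm (phi n x) = 1 \<Longrightarrow> sigma_grad (DD n) x = 0"
proof -
  assume "norm (phi n x) = 1"
  then have "W' n (lam n ^ 2 * (x \<bullet> x)) = 0"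
    by (intro W'_at1) (auto simp: norm_phi)
  then have "norm (sigma_grad (DD n) x) ^ 2 = 0" by (simp add: sigma_DD)
  then show ?thesis by simp
qed

lemma int_ratio: "integrable lborel (\<lambda>x. norm (sigma_grad (DD n) x) ^ 2 / (1 - norm (phi n x) ^ 2))"
proof -
  have "integrable lborel (\<lambda>x. J n (lam n *\<^sub>R x))"
    using integrable_dil_iff[of "lam n" "J n"] lam_pos[of n] int_J[of n] by simp
  then have "integrable lborel (\<lambda>x. lam n ^ 2 * J n (lam n *\<^sub>R x))" by simp
  then show ?thesis by (simp add: ratio_eq)
qed

lemma adm: "admissible (phi n) (DD n)"
  unfolding admissible_def H1_with_grad_def
  using L2_phi L2_DD weak_DD sigma_zero int_ratio by auto

lemma norm1: "(\<integral>x. norm (phi n x) ^ 2 \<partial>lborel) = 1"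
proof -
  have "(\<integral>x. norm (phi n x) ^ 2 \<partial>lborel) = (\<integral>x. w2 n (lam n *\<^sub>R x) \<partial>lborel)" by (simp add: norm_phi2)
  also have "\<dots> = integral\<^sup>L lborel (w2 n) / lam n ^ 3" by (rule dil3[OF lam_pos])
  also have "\<dots> = 1" using lam_cube[of n] Q2_bounds(1)[of n] V4_pos by simp
  finally show ?thesis .
qed

lemma F_eq: "Ffun a (phi n) (DD n) = integral\<^sup>L lborel (J n) / lam n - a / 2 * (integral\<^sup>L lborel (w4 n) / integral\<^sup>L lborel (w2 n))"
proof -
  have l: "lam n > 0" by (rule lam_pos)
  have "(\<integral>x. norm (sigma_grad (DD n) x) ^ 2 / (1 - norm (phi n x) ^ 2) \<partial>lborel)
      = (\<integral>x. lam n ^ 2 * J n (lam n *\<^sub>R x) \<partial>lborel)" by (simp add: ratio_eq)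
  also have "\<dots> = lam n ^ 2 * (\<integral>x. J n (lam n *\<^sub>R x) \<partial>lborel)" by simp
  also have "\<dots> = lam n ^ 2 * (integral\<^sup>L lborel (J n) / lam n ^ 3)" by (simp add: dil3[OF l])
  also have "\<dots> = integral\<^sup>L lborel (J n) / lam n" using l by (simp add: power2_eq_square power3_eq_cube)
  finally have 1: "(\<integral>x. norm (sigma_grad (DD n) x) ^ 2 / (1 - norm (phi n x) ^ 2) \<partial>lborel) = integral\<^sup>L lborel (J n) / lam n" .
  have "(\<integral>x. norm (phi n x) ^ 4 \<partial>lborel) = (\<integral>x. w4 n (lam n *\<^sub>R x) \<partial>lborel)" by (simp add: norm_phi4)
  also have "\<dots> = integral\<^sup>L lborel (w4 n) / lam n ^ 3" by (rule dil3[OF l])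
  finally have 2: "(\<integral>x. norm (phi n x) ^ 4 \<partial>lborel) = integral\<^sup>L lborel (w4 n) / integral\<^sup>L lborel (w2 n)"
    by (simp add: lam_cube)
  show ?thesis unfolding Ffun_def 1 2 ..
qed

lemma poly_bound: "((32 + real n)/32)^12 / (8 + real n)^6 \<ge> real n / 32^12"
proof -
  have "((8 + real n)/32)^12 \<le> ((32 + real n)/32)^12" by (intro power_mono) auto
  then have "(8 + real n)^12 / 32^12 \<le> ((32 + real n)/32)^12" by (simp add: power_divide)
  then have "(8 + real n)^12 / 32^12 / (8 + real n)^6 \<le> ((32 + real n)/32)^12 / (8 + real n)^6"
    by (intro divide_right_mono) auto
  moreover have "(8 + real n)^12 / 32^12 / (8 + real n)^6 = (8 + real n)^6 / 32^12"
  proof -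
    have d: "(8 + real n)^12 / (8 + real n)^6 = (8 + real n)^6"
      using power_diff[of "8 + real n" 6 12] by simp
    have "(8 + real n)^12 / 32^12 / (8 + real n)^6 = ((8 + real n)^12 / (8 + real n)^6) / 32^12"
      by (simp add: divide_divide_eq_left mult.commute)
    then show ?thesis unfolding d .
  qed
  moreover have "real n \<le> (8 + real n)^6"
  proof -
    have "real n \<le> 8 + real n" by simp
    also have "\<dots> = (8 + real n)^1" by simp
    also have "\<dots> \<le> (8 + real n)^6" by (intro power_increasing) auto
    finally show ?thesis .
  qed
  then have "real n / 32^12 \<le> (8 + real n)^6 / 32^12" by (intro divide_right_mono) auto
  ultimately show ?thesis by linarith
qed

lemma F_bound:
  assumes a: "a > 0"
  shows "Ffun a (phi n) (DD n) \<le> 2304 * V / root 3 V4 - a / 2 * (V4 / V) * (real n / 32^12)"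
proof -
  have V4: "V4 > 0" by (rule V4_pos)
  have V: "V > 0" using V4 V4_le_V by linarith
  have r: "root 3 V4 > 0" using V4 by simp
  have l: "lam n > 0" by (rule lam_pos)
  have "integral\<^sup>L lborel (J n) / lam n \<le> 2304 * V / lam n"
    using IJ_upper[of n] l by (intro divide_right_mono) auto
  also have "\<dots> \<le> 2304 * V / root 3 V4"
    using V r lam_ge[of n] l by (intro divide_left_mono) auto
  finally have A: "integral\<^sup>L lborel (J n) / lam n \<le> 2304 * V / root 3 V4" .
  have q2: "integral\<^sup>L lborel (w2 n) > 0" using Q2_bounds(1)[of n] V4 by linarith
  have "0 \<le> ((32 + real n)/32)^12 * V4" using V4 by simp
  then have q4: "0 \<le> integral\<^sup>L lborel (w4 n)" using Q4_lower[of n] by linarith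
  have "((32 + real n)/32)^12 * V4 / ((8 + real n)^6 * V) \<le> integral\<^sup>L lborel (w4 n) / integral\<^sup>L lborel (w2 n)"
    using Q4_lower[of n] q2 q4 Q2_bounds(2)[of n] V4 by (intro frac_le) auto
  moreover have "((32 + real n)/32)^12 * V4 / ((8 + real n)^6 * V) = (V4 / V) * (((32 + real n)/32)^12 / (8 + real n)^6)"
    by (simp only: times_divide_times_eq[symmetric] mult.commute)
  moreover have "(V4 / V) * (real n / 32^12) \<le> (V4 / V) * (((32 + real n)/32)^12 / (8 + real n)^6)"
    using poly_bound[of n] V V4 by (intro mult_left_mono) auto
  ultimately have B: "(V4 / V) * (real n / 32^12) \<le> integral\<^sup>L lborel (w4 n) / integral\<^sup>L lborel (w2 n)" by linarith
  have "a / 2 * ((V4 / V) * (real n / 32^12)) \<le> a / 2 * (integral\<^sup>L lborel (w4 n) / integral\<^sup>L lborel (w2 n))"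
    using B a by (intro mult_left_mono) auto
  then show ?thesis unfolding F_eq using A by (simp add: mult.assoc)
qed

theorem mainTheorem7:
  fixes a :: real
  assumes "a > 0"
  shows "(\<forall>M. \<exists>\<phi> D. admissible \<phi> D \<and> (\<integral>x. norm (\<phi> x) ^ 2 \<partial>lborel) = 1 \<and> Ffun a \<phi> D < M)
       \<and> (\<exists>(\<phi> :: nat \<Rightarrow> real^3 \<Rightarrow> complex^2) D.
            (\<forall>n. admissible (\<phi> n) (D n)
               \<and> (\<integral>x. norm (\<phi> n x) ^ 2 \<partial>lborel) = 1
               \<and> (\<exists>R. \<forall>x. norm x > R \<longrightarrow> \<phi> n x = 0)
               \<and> (\<exists>g :: real \<Rightarrow> real. \<forall>x. \<phi> n x = vector [complex_of_real (g (norm x)), 0]))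
          \<and> filterlim (\<lambda>n. Ffun a (\<phi> n) (D n)) at_bot sequentially)"
proof -
  define K where "K = 2304 * V / root 3 V4"
  define \<kappa> where "\<kappa> = a / 2 * (V4 / V) / 32^12"
  have V4: "V4 > 0" by (rule V4_pos)
  have V: "V > 0" using V4 V4_le_V by linarith
  have kp: "\<kappa> > 0" unfolding \<kappa>_def using assms V V4 by simp
  have Fb: "Ffun a (phi n) (DD n) \<le> K - \<kappa> * real n" for n
    using F_bound[OF assms, of n] unfolding K_def \<kappa>_def by (simp add: field_simps)
  have lim: "filterlim (\<lambda>n. Ffun a (phi n) (DD n)) at_bot sequentially"
    unfolding filterlim_at_bot
  proof
    fix Z :: real
    obtain N :: nat where N: "real N \<ge> (K - Z) / \<kappa>" using real_arch_simple by blast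
    show "\<forall>\<^sub>F n in sequentially. Ffun a (phi n) (DD n) \<le> Z"
      unfolding eventually_sequentially
    proof (intro exI allI impI)
      fix n assume "N \<le> n"
      then have "real n \<ge> (K - Z) / \<kappa>" using N by linarith
      then have "\<kappa> * real n \<ge> K - Z" using kp by (simp add: field_simps)
      then show "Ffun a (phi n) (DD n) \<le> Z" using Fb[of n] by linarith
    qed
  qed
  have each: "admissible (phi n) (DD n)
               \<and> (\<integral>x. norm (phi n x) ^ 2 \<partial>lborel) = 1
               \<and> (\<exists>R. \<forall>x. norm x > R \<longrightarrow> phi n x = 0)
               \<and> (\<exists>g :: real \<Rightarrow> real. \<forall>x. phi n x = vector [complex_of_real (g (norm x)), 0])" for n
  proof (intro conjI)
    show "admissible (phi n) (DD n)" by (rule adm)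
    show "(\<integral>x. norm (phi n x) ^ 2 \<partial>lborel) = 1" by (rule norm1)
    show "\<exists>R. \<forall>x. norm x > R \<longrightarrow> phi n x = 0"
      by (rule exI[of _ "1 / lam n"]) (simp add: phi_def uu_out)
    show "\<exists>g :: real \<Rightarrow> real. \<forall>x. phi n x = vector [complex_of_real (g (norm x)), 0]"
      by (rule exI[of _ "\<lambda>r. W n (lam n ^ 2 * r ^ 2)"])
         (simp add: phi_def uu_def scaleR_e0 power2_norm_eq_inner)
  qed
  have first: "\<forall>M. \<exists>\<phi> D. admissible \<phi> D \<and> (\<integral>x. norm (\<phi> x) ^ 2 \<partial>lborel) = 1 \<and> Ffun a \<phi> D < M"
  proof
    fix M :: real
    have "\<forall>\<^sub>F n in sequentially. Ffun a (phi n) (DD n) \<le> M - 1"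
      using lim unfolding filterlim_at_bot by blast
    then obtain n where "Ffun a (phi n) (DD n) \<le> M - 1"
      using eventually_sequentially by auto
    then show "\<exists>\<phi> D. admissible \<phi> D \<and> (\<integral>x. norm (\<phi> x) ^ 2 \<partial>lborel) = 1 \<and> Ffun a \<phi> D < M"
      using each[of n] by (intro exI[of _ "phi n"] exI[of _ "DD n"]) auto
  qed
  show ?thesis
    using first each lim by blast
qed

end
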